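(* Let $SC\subset[0,1]^2$ be the Sierpiński carpet. Then $S(SC)=\{(0,0)\}$. Consequently, $SC$ is not the achievement set $E(v_n)$ of any sequence $(v_n)$ in $\mathbb R^2$ with $\sum_n v_n$ absolutely convergent.
   Context: The Sierpiński carpet is the set of points $(s,t)\in[0,1]^2$ admitting ternary expansions $s=\sum_{i\ge1}a_i3^{-i}$, $t=\sum_{i\ge1}b_i3^{-i}$ ($a_i,b_i\in\{0,1,2\}$) with no index $i$ such that $a_i=b_i=1$; equivalently, it is obtained from $[0,1]^2$ by dividing into nine congruent subsquares, removing the open middle one, and iterating on the remaining squares. For an absolutely convergent series $\sum_n v_n$ in $\mathbb R^2$, $E(v_n)=\{\sum_{n=1}^\infty \varepsilon_n v_n : (\varepsilon_n)\in\{0,1\}^{\mathbb N}\}$. For $A\subset\mathbb R^2$, the spectre of $A$ is $S(A)=\{x\in \mathbb R^2:\ \forall y\in A,\ y+x\in A\text{ or }y-x\in A\}$. *)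

theory Defs
  imports "HOL-Analysis.Analysis"
begin

text \<open>Points of the plane are pairs of reals. Sequences are indexed from 0
  (index i corresponds to the paper's index i+1).\<close>

definition sierpinski_carpet :: "(real \<times> real) set" where
  "sierpinski_carpet = {(s, t). \<exists>a b :: nat \<Rightarrow> nat.
      (\<forall>i. a i \<le> 2 \<and> b i \<le> 2) \<and>
      s = (\<Sum>i. real (a i) / 3 ^ (Suc i)) \<and>
      t = (\<Sum>i. real (b i) / 3 ^ (Suc i)) \<and>
      \<not> (\<exists>i. a i = 1 \<and> b i = 1)}"

definition achievement_set :: "(nat \<Rightarrow> real \<times> real) \<Rightarrow> (real \<times> real) set" where
  "achievement_set v = {(\<Sum>n. if \<epsilon> n then v n else 0) | \<epsilon> :: nat \<Rightarrow> bool. True}"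

definition spectre :: "(real \<times> real) set \<Rightarrow> (real \<times> real) set" where
  "spectre A = {x. \<forall>y\<in>A. y + x \<in> A \<or> y - x \<in> A}"

end

theory Submission
  imports Defs
begin

definition dsum :: "(nat \<Rightarrow> nat) \<Rightarrow> real" where
  "dsum a = (\<Sum>i. real (a i) / 3 ^ Suc i)"

lemma geom2: "(\<lambda>i. 2 / 3 ^ Suc i :: real) sums 1"
proof -
  have "(\<lambda>i. (1/3::real) ^ i) sums (1 / (1 - 1/3))"
    by (rule geometric_sums) simp
  hence "(\<lambda>i. (2/3) * (1/3::real) ^ i) sums ((2/3) * (1 / (1 - 1/3)))"
    by (rule sums_mult)
  moreover have "(\<lambda>i. (2/3) * (1/3::real) ^ i) = (\<lambda>i. 2 / 3 ^ Suc i)"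
    by (auto simp: power_divide field_simps)
  ultimately show ?thesis by simp
qed

lemma dsum_summable:
  assumes "\<forall>i. a i \<le> 2"
  shows "summable (\<lambda>i. real (a i) / 3 ^ Suc i)"
proof (rule summable_comparison_test[OF _ sums_summable[OF geom2]])
  show "\<exists>N. \<forall>n\<ge>N. norm (real (a n) / 3 ^ Suc n) \<le> 2 / 3 ^ Suc n"
    using assms by (auto intro!: divide_right_mono)
qed

lemma dsum_bounds:
  assumes "\<forall>i. a i \<le> 2"
  shows "0 \<le> dsum a \<and> dsum a \<le> 1"
proof
  show "0 \<le> dsum a" unfolding dsum_def
    by (rule suminf_nonneg[OF dsum_summable[OF assms]]) simp
  have "dsum a \<le> (\<Sum>i. 2 / 3 ^ Suc i :: real)" unfolding dsum_def
    by (rule suminf_le[OF _ dsum_summable[OF assms] sums_summable[OF geom2]])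
       (use assms in \<open>auto intro!: divide_right_mono\<close>)
  thus "dsum a \<le> 1" using sums_unique[OF geom2] by simp
qed

lemma dsum_head:
  assumes "\<forall>i. a i \<le> 2"
  shows "dsum a = real (a 0) / 3 + dsum (\<lambda>i. a (Suc i)) / 3"
proof -
  have s: "summable (\<lambda>i. real (a i) / 3 ^ Suc i)" by (rule dsum_summable[OF assms])
  have "dsum (\<lambda>i. a (Suc i)) / 3 = (\<Sum>i. real (a (Suc i)) / 3 ^ Suc i / 3)"
    unfolding dsum_def
    by (rule suminf_divide[symmetric], rule dsum_summable) (use assms in auto)
  also have "\<dots> = (\<Sum>i. real (a (Suc i)) / 3 ^ Suc (Suc i))"
    by (simp add: field_simps)
  also have "\<dots> = dsum a - real (a 0) / 3"
    unfolding dsum_def using suminf_split_head[OF s] by simp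
  finally show ?thesis by (simp add: field_simps)
qed

lemma dsum_mid:
  assumes "\<forall>i. a i \<le> 2" "1/3 < dsum a" "dsum a < 2/3"
  shows "a 0 = 1"
proof -
  have b: "0 \<le> dsum (\<lambda>i. a (Suc i)) \<and> dsum (\<lambda>i. a (Suc i)) \<le> 1"
    using assms(1) by (intro dsum_bounds) auto
  have h: "dsum a = real (a 0) / 3 + dsum (\<lambda>i. a (Suc i)) / 3" by (rule dsum_head[OF assms(1)])
  have "a 0 \<le> 2" using assms(1) by auto
  hence "a 0 = 0 \<or> a 0 = 1 \<or> a 0 = 2" by auto
  thus ?thesis using h b assms(2,3) by auto
qed

lemma dsum_shift:
  assumes "\<forall>i. a i \<le> 2"
  shows "\<exists>n::int. 3 ^ k * dsum a = of_int n + dsum (\<lambda>i. a (i + k))"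
proof -
  have s: "summable (\<lambda>i. real (a i) / 3 ^ Suc i)" by (rule dsum_summable[OF assms])
  have "(\<Sum>i. real (a (i + k)) / 3 ^ Suc (i + k)) = (\<Sum>i. real (a (i + k)) / 3 ^ Suc i / 3 ^ k)"
    by (simp add: power_add field_simps)
  also have "\<dots> = dsum (\<lambda>i. a (i + k)) / 3 ^ k"
    unfolding dsum_def
    by (rule suminf_divide, rule dsum_summable) (use assms in auto)
  finally have e1: "(\<Sum>i. real (a (i + k)) / 3 ^ Suc (i + k)) = dsum (\<lambda>i. a (i + k)) / 3 ^ k" .
  have e2: "dsum a = dsum (\<lambda>i. a (i + k)) / 3 ^ k + (\<Sum>i<k. real (a i) / 3 ^ Suc i)"
    unfolding dsum_def using suminf_split_initial_segment[OF s, of k] e1 unfolding dsum_def by simp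
  have e3: "3 ^ k * (\<Sum>i<k. real (a i) / 3 ^ Suc i) = (\<Sum>i<k. real (a i) * 3 ^ (k - Suc i))"
    unfolding sum_distrib_left
  proof (rule sum.cong)
    fix i assume "i \<in> {..<k}"
    hence "k = (k - Suc i) + Suc i" by simp
    hence "(3::real) ^ k = 3 ^ (k - Suc i) * 3 ^ Suc i"
      by (metis power_add)
    thus "3 ^ k * (real (a i) / 3 ^ Suc i) = real (a i) * 3 ^ (k - Suc i)" by simp
  qed simp
  have "3 ^ k * dsum a = (\<Sum>i<k. real (a i) * 3 ^ (k - Suc i)) + dsum (\<lambda>i. a (i + k))"
    unfolding e2 distrib_left e3 by simp
  thus ?thesis
    by (intro exI[of _ "\<Sum>i<k. int (a i) * 3 ^ (k - Suc i)"]) simp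
qed

lemma hole_digit:
  assumes "\<forall>i. a i \<le> 2" "1/3 < 3 ^ k * dsum a - of_int m" "3 ^ k * dsum a - of_int m < 2/3"
  shows "a k = 1"
proof -
  obtain n :: int where n: "3 ^ k * dsum a = of_int n + dsum (\<lambda>i. a (i + k))"
    using dsum_shift[OF assms(1)] by blast
  have b: "0 \<le> dsum (\<lambda>i. a (i + k)) \<and> dsum (\<lambda>i. a (i + k)) \<le> 1"
    using assms(1) by (intro dsum_bounds) auto
  have "-1 < real_of_int (m - n)" "real_of_int (m - n) < 1" using n b assms(2,3) by auto
  hence "m - n = 0" by linarith
  hence "1/3 < dsum (\<lambda>i. a (i + k))" "dsum (\<lambda>i. a (i + k)) < 2/3" using n assms(2,3) by auto
  from dsum_mid[OF _ this] assms(1) show ?thesis by simp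
qed

lemma SC_iff: "(s, t) \<in> sierpinski_carpet \<longleftrightarrow> (\<exists>a b. (\<forall>i. a i \<le> 2 \<and> b i \<le> 2) \<and>
   s = dsum a \<and> t = dsum b \<and> \<not> (\<exists>i. a i = 1 \<and> b i = 1))"
  unfolding sierpinski_carpet_def dsum_def by auto

lemma SC_box: "(s, t) \<in> sierpinski_carpet \<Longrightarrow> 0 \<le> s \<and> s \<le> 1 \<and> 0 \<le> t \<and> t \<le> 1"
proof -
  assume "(s, t) \<in> sierpinski_carpet"
  then obtain a b where ab: "\<forall>i. a i \<le> 2 \<and> b i \<le> 2" "s = dsum a" "t = dsum b"
    unfolding SC_iff by blast
  have "\<forall>i. a i \<le> 2" "\<forall>i. b i \<le> 2" using ab(1) by auto
  from dsum_bounds[OF this(1)] dsum_bounds[OF this(2)] ab show ?thesis by simp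
qed

lemma SC_hole:
  assumes "(s, t) \<in> sierpinski_carpet"
    "1/3 < 3 ^ k * s - of_int m1" "3 ^ k * s - of_int m1 < 2/3"
    "1/3 < 3 ^ k * t - of_int m2" "3 ^ k * t - of_int m2 < 2/3"
  shows False
proof -
  obtain a b where ab: "\<forall>i. a i \<le> 2 \<and> b i \<le> 2" "s = dsum a" "t = dsum b"
      "\<not> (\<exists>i. a i = 1 \<and> b i = 1)"
    using assms(1) unfolding SC_iff by blast
  have "a k = 1" using hole_digit[of a k m1] ab assms by auto
  moreover have "b k = 1" using hole_digit[of b k m2] ab assms by auto
  ultimately show False using ab(4) by blast
qed

lemma SC_swap: "(s, t) \<in> sierpinski_carpet \<Longrightarrow> (t, s) \<in> sierpinski_carpet"
proof -
  assume "(s, t) \<in> sierpinski_carpet"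
  then obtain a b where ab: "\<forall>i. a i \<le> 2 \<and> b i \<le> 2" "s = dsum a" "t = dsum b"
      "\<not> (\<exists>i. a i = 1 \<and> b i = 1)"
    unfolding SC_iff by blast
  show ?thesis unfolding SC_iff
    by (rule exI[of _ b], rule exI[of _ a]) (use ab in auto)
qed

lemma SC_intro:
  assumes "\<forall>i. a i \<le> 2 \<and> b i \<le> 2" "\<not> (\<exists>i. a i = 1 \<and> b i = 1)"
    "(\<lambda>i. real (a i) / 3 ^ Suc i) sums s" "(\<lambda>i. real (b i) / 3 ^ Suc i) sums t"
  shows "(s, t) \<in> sierpinski_carpet"
  unfolding SC_iff dsum_def
  by (rule exI[of _ a], rule exI[of _ b]) (use assms sums_unique in auto)

lemma SC_00: "(0, 0) \<in> sierpinski_carpet"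
  by (rule SC_intro[of "\<lambda>_. 0" "\<lambda>_. 0"]) auto

lemma SC_01: "(0, 1) \<in> sierpinski_carpet"
  by (rule SC_intro[of "\<lambda>_. 0" "\<lambda>_. 2"]) (use geom2 in auto)

lemma SC_59: "(5/9, 0) \<in> sierpinski_carpet"
proof (rule SC_intro[of "\<lambda>i. if i = 0 then 1 else if i = 1 then 2 else 0" "\<lambda>_. 0"])
  have "(\<lambda>i. real (if i = 0 then 1 else if i = 1 then 2 else 0) / 3 ^ Suc i) sums
     (\<Sum>i\<in>{0,1}. real (if i = 0 then 1 else if i = 1 then 2 else 0) / 3 ^ Suc i)"
    by (rule sums_finite) auto
  thus "(\<lambda>i. real (if i = 0 then 1 else if i = 1 then 2 else 0) / 3 ^ Suc i) sums (5/9)"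
    by simp
qed auto

lemma SC_T1: "(0, (4/9) / 3 ^ j) \<in> sierpinski_carpet"
proof (rule SC_intro[of "\<lambda>_. 0" "\<lambda>i. if i = j \<or> i = Suc j then 1 else 0"])
  have "(\<lambda>i. real (if i = j \<or> i = Suc j then 1 else 0) / 3 ^ Suc i) sums
     (\<Sum>i\<in>{j, Suc j}. real (if i = j \<or> i = Suc j then 1 else 0) / 3 ^ Suc i)"
    by (rule sums_finite) auto
  thus "(\<lambda>i. real (if i = j \<or> i = Suc j then 1 else 0) / 3 ^ Suc i) sums ((4/9) / 3 ^ j)"
    by (simp add: field_simps)
qed auto

lemma SC_T2: "((4/27) / 3 ^ j, (17/27) / 3 ^ j) \<in> sierpinski_carpet"
proof (rule SC_intro[of "\<lambda>i. if i = Suc j \<or> i = Suc (Suc j) then 1 else 0"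
      "\<lambda>i. if i = j then 1 else if i = Suc j \<or> i = Suc (Suc j) then 2 else 0"])
  have "(\<lambda>i. real (if i = Suc j \<or> i = Suc (Suc j) then 1 else 0) / 3 ^ Suc i) sums
     (\<Sum>i\<in>{Suc j, Suc (Suc j)}. real (if i = Suc j \<or> i = Suc (Suc j) then 1 else 0) / 3 ^ Suc i)"
    by (rule sums_finite) auto
  thus "(\<lambda>i. real (if i = Suc j \<or> i = Suc (Suc j) then 1 else 0) / 3 ^ Suc i) sums ((4/27) / 3 ^ j)"
    by (simp add: field_simps)
  have "(\<lambda>i. real (if i = j then 1 else if i = Suc j \<or> i = Suc (Suc j) then 2 else 0) / 3 ^ Suc i) sums
     (\<Sum>i\<in>{j, Suc j, Suc (Suc j)}. real (if i = j then 1 else if i = Suc j \<or> i = Suc (Suc j) then 2 else 0) / 3 ^ Suc i)"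
    by (rule sums_finite) auto
  thus "(\<lambda>i. real (if i = j then 1 else if i = Suc j \<or> i = Suc (Suc j) then 2 else 0) / 3 ^ Suc i) sums ((17/27) / 3 ^ j)"
    by (simp add: field_simps)
qed auto

lemma SC_out: "s < 0 \<or> s > 1 \<or> t < 0 \<or> t > 1 \<Longrightarrow> (s, t) \<notin> sierpinski_carpet"
  using SC_box by force

lemma exists_scale:
  fixes p :: real
  assumes "0 < p" "p < 3/5"
  shows "\<exists>j. 1/5 \<le> 3 ^ j * p \<and> 3 ^ j * p < 3/5"
proof -
  obtain n where n: "1 / (5 * p) < 3 ^ n" using real_arch_pow[of 3 "1 / (5 * p)"] by auto
  hence ex: "1/5 \<le> 3 ^ n * p" using assms by (simp add: field_simps)
  define j where "j = (LEAST n. 1/5 \<le> 3 ^ n * p)"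
  have j1: "1/5 \<le> 3 ^ j * p" unfolding j_def by (rule LeastI[of _ n]) (rule ex)
  have "3 ^ j * p < 3/5"
  proof (cases j)
    case 0 thus ?thesis using assms by simp
  next
    case (Suc i)
    hence "\<not> (1/5 \<le> 3 ^ i * p)" unfolding j_def by (intro not_less_Least) (simp add: j_def)
    thus ?thesis using Suc by (auto simp: algebra_simps)
  qed
  with j1 show ?thesis by blast
qed

lemma bad_pos:
  assumes "0 < p"
  shows "\<exists>a b. (a, b) \<in> sierpinski_carpet \<and> (a + p, b) \<notin> sierpinski_carpet \<and> (a - p, b) \<notin> sierpinski_carpet"
proof (cases "p \<ge> 3/5")
  case True
  show ?thesis
    by (rule exI[of _ "5/9"], rule exI[of _ 0]) (use True SC_59 SC_out in auto)
next
  case False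
  then obtain j where j: "1/5 \<le> 3 ^ j * p" "3 ^ j * p < 3/5" using exists_scale assms by force
  have pos: "(0::real) < 3 ^ j" by simp
  show ?thesis
  proof (cases "3 ^ j * p \<le> 1/3")
    case True
    have "(4/27 / 3 ^ j + p, 17/27 / 3 ^ j) \<notin> sierpinski_carpet"
    proof
      assume h: "(4/27 / 3 ^ j + p, 17/27 / 3 ^ j) \<in> sierpinski_carpet"
      have e1: "3 ^ j * (4/27 / 3 ^ j + p) - of_int 0 = 4/27 + 3 ^ j * p"
        using pos by (simp add: field_simps)
      have e2: "3 ^ j * (17/27 / 3 ^ j) - of_int 0 = (17/27::real)"
        using pos by (simp add: field_simps)
      show False
        by (rule SC_hole[OF h, of j 0 0]) (use e1 e2 j True in simp_all)
    qed
    moreover have "4/27 / 3 ^ j - p < 0"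
    proof -
      have "4/27 < 3 ^ j * p" using j by simp
      thus ?thesis using pos by (simp add: field_simps)
    qed
    ultimately show ?thesis
      by (intro exI[of _ "4/27 / 3 ^ j"] exI[of _ "17/27 / 3 ^ j"]) (use SC_T2 SC_out in auto)
  next
    case False
    have "(0 + p, 4/9 / 3 ^ j) \<notin> sierpinski_carpet"
    proof
      assume h: "(0 + p, 4/9 / 3 ^ j) \<in> sierpinski_carpet"
      have e2: "3 ^ j * (4/9 / 3 ^ j) - of_int 0 = (4/9::real)"
        using pos by (simp add: field_simps)
      show False
        by (rule SC_hole[OF h, of j 0 0]) (use e2 j False in simp_all)
    qed
    thus ?thesis
      by (intro exI[of _ 0] exI[of _ "4/9 / 3 ^ j"]) (use SC_T1 SC_out assms in auto)
  qed
qed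

lemma bad_p0:
  assumes "p \<noteq> 0"
  shows "\<exists>a b. (a, b) \<in> sierpinski_carpet \<and> (a + p, b) \<notin> sierpinski_carpet \<and> (a - p, b) \<notin> sierpinski_carpet"
proof (cases "p > 0")
  case True thus ?thesis by (rule bad_pos)
next
  case False
  hence "0 < - p" using assms by simp
  from bad_pos[OF this] obtain a b where
    "(a, b) \<in> sierpinski_carpet" "(a + - p, b) \<notin> sierpinski_carpet" "(a - - p, b) \<notin> sierpinski_carpet"
    by blast
  thus ?thesis by (intro exI[of _ a] exI[of _ b]) simp
qed

lemma spectre_SC: "spectre sierpinski_carpet = {(0, 0)}"
proof
  show "{(0, 0)} \<subseteq> spectre sierpinski_carpet"
    unfolding spectre_def by auto
  show "spectre sierpinski_carpet \<subseteq> {(0, 0)}"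
  proof
    fix x assume x: "x \<in> spectre sierpinski_carpet"
    obtain p q where pq: "x = (p, q)" by (cases x)
    have sp: "\<And>a b. (a, b) \<in> sierpinski_carpet \<Longrightarrow>
        (a + p, b + q) \<in> sierpinski_carpet \<or> (a - p, b - q) \<in> sierpinski_carpet"
      using x pq unfolding spectre_def by fastforce
    show "x \<in> {(0, 0)}"
    proof (rule ccontr)
      assume "x \<notin> {(0, 0)}"
      hence nz: "p \<noteq> 0 \<or> q \<noteq> 0" using pq by auto
      show False
      proof (cases "p = 0")
        case True
        hence "q \<noteq> 0" using nz by simp
        from bad_p0[OF this] obtain a b where ab: "(a, b) \<in> sierpinski_carpet"
          "(a + q, b) \<notin> sierpinski_carpet" "(a - q, b) \<notin> sierpinski_carpet" by blast
        have "(b + p, a + q) \<in> sierpinski_carpet \<or> (b - p, a - q) \<in> sierpinski_carpet"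
          using sp[OF SC_swap[OF ab(1)]] .
        thus False using ab True SC_swap by fastforce
      next
        case pnz: False
        show False
        proof (cases "q = 0")
          case True
          from bad_p0[OF pnz] obtain a b where ab: "(a, b) \<in> sierpinski_carpet"
            "(a + p, b) \<notin> sierpinski_carpet" "(a - p, b) \<notin> sierpinski_carpet" by blast
          thus False using sp[OF ab(1)] True by simp
        next
          case qnz: False
          show False
          proof (cases "(p > 0 \<and> q > 0) \<or> (p < 0 \<and> q < 0)")
            case True
            thus False using sp[OF SC_01] SC_out by force
          next
            case False
            hence "(p > 0 \<and> q < 0) \<or> (p < 0 \<and> q > 0)" using pnz qnz by linarith
            thus False using sp[OF SC_00] SC_out by force
          qed
        qed
      qed
    qed
  qed
qed

lemma achv_spectre:
  fixes v :: "nat \<Rightarrow> real \<times> real"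
  assumes sv: "summable (\<lambda>n. norm (v n))"
  shows "v n \<in> spectre (achievement_set v)"
proof -
  define f where "f = (\<lambda>\<epsilon> i. if \<epsilon> i then v i else 0)"
  have summ: "summable (f \<epsilon>)" for \<epsilon>
  proof (rule summable_comparison_test[OF _ sv])
    show "\<exists>N. \<forall>i\<ge>N. norm (f \<epsilon> i) \<le> norm (v i)" by (auto simp: f_def)
  qed
  have single: "(\<lambda>i. if i = n then v i else 0) sums v n" by (rule sums_single)
  have key: "suminf (f \<epsilon>) = suminf (f (\<epsilon>(n := False))) + v n" if "\<epsilon> n" for \<epsilon>
  proof -
    have "(\<lambda>i. f (\<epsilon>(n := False)) i + (if i = n then v i else 0)) sums (suminf (f (\<epsilon>(n := False))) + v n)"
      by (rule sums_add[OF summable_sums[OF summ] single])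
    moreover have "(\<lambda>i. f (\<epsilon>(n := False)) i + (if i = n then v i else 0)) = f \<epsilon>"
      using that by (auto simp: f_def)
    ultimately show ?thesis using sums_unique by metis
  qed
  have key2: "suminf (f (\<epsilon>(n := True))) = suminf (f \<epsilon>) + v n" if "\<not> \<epsilon> n" for \<epsilon>
  proof -
    have "(\<lambda>i. f \<epsilon> i + (if i = n then v i else 0)) sums (suminf (f \<epsilon>) + v n)"
      by (rule sums_add[OF summable_sums[OF summ] single])
    moreover have "(\<lambda>i. f \<epsilon> i + (if i = n then v i else 0)) = f (\<epsilon>(n := True))"
      using that by (auto simp: f_def)
    ultimately show ?thesis using sums_unique by metis
  qed
  have A: "achievement_set v = {suminf (f \<epsilon>) | \<epsilon>. True}"
    unfolding achievement_set_def f_def by simp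
  show ?thesis
    unfolding spectre_def A
  proof (intro CollectI ballI)
    fix y assume "y \<in> {suminf (f \<epsilon>) | \<epsilon>. True}"
    then obtain \<epsilon> where y: "y = suminf (f \<epsilon>)" by blast
    show "y + v n \<in> {suminf (f \<epsilon>) | \<epsilon>. True} \<or> y - v n \<in> {suminf (f \<epsilon>) | \<epsilon>. True}"
    proof (cases "\<epsilon> n")
      case True
      hence "y - v n = suminf (f (\<epsilon>(n := False)))" using key y by simp
      thus ?thesis by blast
    next
      case False
      hence "y + v n = suminf (f (\<epsilon>(n := True)))" using key2 y by simp
      thus ?thesis by blast
    qed
  qed
qed

theorem mainTheorem19:
  shows "spectre sierpinski_carpet = {(0, 0)} \<and>
         \<not> (\<exists>v :: nat \<Rightarrow> real \<times> real. summable (\<lambda>n. norm (v n)) \<and>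
               sierpinski_carpet = achievement_set v)"
proof (rule conjI[OF spectre_SC], rule notI)
  assume "\<exists>v :: nat \<Rightarrow> real \<times> real. summable (\<lambda>n. norm (v n)) \<and>
               sierpinski_carpet = achievement_set v"
  then obtain v :: "nat \<Rightarrow> real \<times> real" where v: "summable (\<lambda>n. norm (v n))"
    "sierpinski_carpet = achievement_set v" by blast
  have "v n = 0" for n
    using achv_spectre[OF v(1), of n] v(2) spectre_SC by (simp add: zero_prod_def)
  hence z: "\<And>\<epsilon>. (\<Sum>n. if \<epsilon> n then v n else 0) = 0"
  proof -
    fix \<epsilon>
    have "(\<lambda>n. if \<epsilon> n then v n else 0) = (\<lambda>n. 0)" using \<open>\<And>n. v n = 0\<close> by auto
    thus "(\<Sum>n. if \<epsilon> n then v n else 0) = 0" by (simp only: suminf_zero)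
  qed
  have "achievement_set v = {0}"
    unfolding achievement_set_def z by auto
  hence "((5/9::real), (0::real)) \<in> {0}" using SC_59 v(2) by simp
  thus False by (simp add: zero_prod_def)
qed

end
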